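(* There is an absolute constant $C>0$ such that the following holds. Let $\alpha\in(0,1)$, $w(\alpha)=\sqrt{\alpha(1-\alpha)}$, let $a_1,\dots,a_N$ be i.i.d. $\mathsf{Ber}(\alpha)$ and $\widehat a_i=(a_i-\alpha)/w(\alpha)$. Let $k\ge1$ and suppose $N\ge16k^4/w(\alpha)^2$. For $\sigma\in S_k$ let $$f_\alpha(\sigma)=\Big|\sum_{\substack{\bm i\in[N]^k\\ \bm i\text{ compatible with }\sigma}}\mathbb{E}[\widehat a_{i_1}\cdots\widehat a_{i_k}]\Big|.$$ Then for every $\sigma\in S_k$, $$f_\alpha(\sigma)\le C\,k\,e^{k^{3/4}}\,w(\alpha)^{-\sum_{a=3}^k(a-2)|\mathsf{cyc}_a(\sigma)|}\,\big(|\mathsf{cyc}_1(\sigma)|\big)!!\,N^{|\mathsf{cyc}_1(\sigma)|/2+|\mathsf{cyc}_{\ge2}(\sigma)|}.$$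
   Context: $S_k$ is the symmetric group on $[k]=\{1,\dots,k\}$. For $\sigma\in S_k$ and $\bm i=(i_1,\dots,i_k)\in[N]^k$, $\sigma\bm i=(i_{\sigma(1)},\dots,i_{\sigma(k)})$, and $\bm i$ is compatible with $\sigma$ if $\sigma\bm i=\bm i$. $\mathsf{cyc}_a(\sigma)$ (resp. $\mathsf{cyc}_{\ge a}(\sigma)$) is the set of cycles of $\sigma$ of length exactly $a$ (resp. at least $a$), fixed points counting as cycles of length 1. $n!!=n(n-2)(n-4)\cdots$ (ending at 1 or 2), with $0!!=1$. $\mathsf{Ber}(\alpha)$ is the law of a $\{0,1\}$ variable equal to 1 with probability $\alpha$. *)

theory Defs
  imports "HOL-Probability.Probability" "HOL-Combinatorics.Orbits" "HOL-Combinatorics.Permutations"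
begin

fun dfact :: "nat \<Rightarrow> nat" where
  "dfact 0 = 1"
| "dfact (Suc 0) = 1"
| "dfact (Suc (Suc n)) = Suc (Suc n) * dfact n"

definition cyc_count :: "nat \<Rightarrow> (nat \<Rightarrow> nat) \<Rightarrow> nat \<Rightarrow> nat" where
  "cyc_count k \<sigma> a = card {orbit \<sigma> x | x. x < k \<and> card (orbit \<sigma> x) = a}"

definition cyc_count_ge :: "nat \<Rightarrow> (nat \<Rightarrow> nat) \<Rightarrow> nat \<Rightarrow> nat" where
  "cyc_count_ge k \<sigma> a = card {orbit \<sigma> x | x. x < k \<and> card (orbit \<sigma> x) \<ge> a}"

definition wB :: "real \<Rightarrow> real" where
  "wB \<alpha> = sqrt (\<alpha> * (1 - \<alpha>))"

text \<open>Joint law of a_0,...,a_{N-1} i.i.d. Ber(alpha) (True = 1).\<close>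
definition ber_vec :: "nat \<Rightarrow> real \<Rightarrow> (nat \<Rightarrow> bool) pmf" where
  "ber_vec N \<alpha> = Pi_pmf {..<N} False (\<lambda>_. bernoulli_pmf \<alpha>)"

definition ahat :: "real \<Rightarrow> (nat \<Rightarrow> bool) \<Rightarrow> nat \<Rightarrow> real" where
  "ahat \<alpha> a i = (of_bool (a i) - \<alpha>) / wB \<alpha>"

text \<open>f_alpha(sigma): index tuples i in [N]^k are functions {0..<k} -> {0..<N};
  sigma acts by (sigma i)_j = i_(sigma j); compatible means sigma i = i.\<close>
definition f_alpha :: "nat \<Rightarrow> nat \<Rightarrow> real \<Rightarrow> (nat \<Rightarrow> nat) \<Rightarrow> real" where
  "f_alpha N k \<alpha> \<sigma> = \<bar>\<Sum>i \<in> {i \<in> {..<k} \<rightarrow>\<^sub>E {..<N}. \<forall>j<k. i (\<sigma> j) = i j}.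
      measure_pmf.expectation (ber_vec N \<alpha>) (\<lambda>a. \<Prod>j<k. ahat \<alpha> a (i j))\<bar>"

end

theory Submission
  imports Defs
begin

definition cntS :: "('c \<Rightarrow> nat) \<Rightarrow> 'c set \<Rightarrow> ('c \<Rightarrow> nat) \<Rightarrow> nat \<Rightarrow> nat" where
  "cntS lf S g u = sum lf {c\<in>S. g c = u}"

definition TT :: "(nat \<Rightarrow> real) \<Rightarrow> nat \<Rightarrow> ('c \<Rightarrow> nat) \<Rightarrow> 'c set \<Rightarrow> real" where
  "TT h N lf S = (\<Sum>g\<in>S \<rightarrow>\<^sub>E {..<N}. \<Prod>u<N. h (cntS lf S g u))"

lemma TT_nonneg: "(\<And>n. 0 \<le> h n) \<Longrightarrow> 0 \<le> TT h N lf S"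
  unfolding TT_def by (intro sum_nonneg prod_nonneg) auto

lemma TT_empty: "h 0 = 1 \<Longrightarrow> TT h N lf {} = 1"
  unfolding TT_def cntS_def by simp

lemma fiber_le:
  fixes h :: "nat \<Rightarrow> real"
  assumes fin: "finite R" and A: "A \<subseteq> R" and u0: "u0 < N" and h0: "h 0 = 1" and hnn: "\<And>n. 0 \<le> h n"
  shows "(\<Sum>g\<in>{g \<in> R \<rightarrow>\<^sub>E {..<N}. {c\<in>R. g c = u0} = A}. \<Prod>u\<in>{..<N}-{u0}. h (cntS lf R g u))
         \<le> TT h N lf (R - A)"
proof -
  let ?F = "{g \<in> R \<rightarrow>\<^sub>E {..<N}. {c\<in>R. g c = u0} = A}"
  let ?Q = "\<lambda>g'. \<Prod>u<N. h (cntS lf (R - A) g' u)"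
  have eq: "(\<Prod>u\<in>{..<N}-{u0}. h (cntS lf R g u)) = ?Q (restrict g (R - A))" if g: "g \<in> ?F" for g
  proof -
    have c1: "cntS lf (R - A) (restrict g (R - A)) u = cntS lf R g u" if "u \<noteq> u0" for u
      unfolding cntS_def using g that by (intro arg_cong[where f="sum lf"]) auto
    have "{c\<in>R - A. restrict g (R - A) c = u0} = {}" using g by auto
    hence c2: "cntS lf (R - A) (restrict g (R - A)) u0 = 0"
      unfolding cntS_def by (simp only: sum.empty)
    have "?Q (restrict g (R - A)) = h (cntS lf (R - A) (restrict g (R - A)) u0) *
            (\<Prod>u\<in>{..<N}-{u0}. h (cntS lf (R - A) (restrict g (R - A)) u))"
      using u0 by (subst prod.remove[of _ u0]) auto
    also have "\<dots> = (\<Prod>u\<in>{..<N}-{u0}. h (cntS lf R g u))"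
      using c1 c2 h0 by (auto intro!: prod.cong)
    finally show ?thesis by simp
  qed
  have inj: "inj_on (\<lambda>g. restrict g (R - A)) ?F"
  proof (rule inj_onI)
    fix g1 g2 assume g1: "g1 \<in> ?F" and g2: "g2 \<in> ?F" and e: "restrict g1 (R - A) = restrict g2 (R - A)"
    show "g1 = g2"
    proof
      fix c
      show "g1 c = g2 c"
      proof (cases "c \<in> R")
        case True
        then show ?thesis
        proof (cases "c \<in> A")
          case True
          have "g1 c = u0" using g1 True by blast
          moreover have "g2 c = u0" using g2 True by blast
          ultimately show ?thesis by simp
        next
          case False thus ?thesis using e \<open>c \<in> R\<close> by (metis Diff_iff restrict_apply')
        qed
      next
        case False thus ?thesis using g1 g2 by (auto simp: PiE_def extensional_def)
      qed
    qed
  qed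
  have "(\<Sum>g\<in>?F. \<Prod>u\<in>{..<N}-{u0}. h (cntS lf R g u)) = (\<Sum>g\<in>?F. ?Q (restrict g (R - A)))"
    using eq by (rule sum.cong[OF refl])
  also have "\<dots> = (\<Sum>g'\<in>(\<lambda>g. restrict g (R - A)) ` ?F. ?Q g')"
    using inj by (simp add: sum.reindex)
  also have "\<dots> \<le> (\<Sum>g'\<in>(R - A) \<rightarrow>\<^sub>E {..<N}. ?Q g')"
    using fin by (intro sum_mono2 finite_PiE prod_nonneg hnn) (auto simp: PiE_def Pi_def)
  finally show ?thesis unfolding TT_def .
qed

lemma TT_insert_le:
  fixes h :: "nat \<Rightarrow> real"
  assumes fin: "finite R" and c0: "c0 \<notin> R" and h0: "h 0 = 1" and hnn: "\<And>n. 0 \<le> h n"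
  shows "TT h N lf (insert c0 R) \<le> real N * (\<Sum>A\<in>Pow R. h (lf c0 + sum lf A) * TT h N lf (R - A))"
proof -
  let ?P = "\<lambda>g u0. \<Prod>u\<in>{..<N}-{u0}. h (cntS lf R g u)"
  have cnt: "cntS lf (insert c0 R) (g(c0 := u0)) u = (if u = u0 then lf c0 else 0) + cntS lf R g u"
    for g u0 u
  proof -
    have "{c \<in> insert c0 R. (g(c0 := u0)) c = u} =
          (if u = u0 then insert c0 {c\<in>R. g c = u} else {c\<in>R. g c = u})"
      using c0 by auto
    thus ?thesis unfolding cntS_def using fin c0 by auto
  qed
  have step2: "(\<Prod>u<N. h (cntS lf (insert c0 R) (g(c0 := u0)) u)) = h (lf c0 + cntS lf R g u0) * ?P g u0"
    if "u0 < N" for g u0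
  proof -
    have "(\<Prod>u<N. h (cntS lf (insert c0 R) (g(c0 := u0)) u)) =
       h (cntS lf (insert c0 R) (g(c0 := u0)) u0) * (\<Prod>u\<in>{..<N}-{u0}. h (cntS lf (insert c0 R) (g(c0 := u0)) u))"
      using that by (subst prod.remove[of _ u0]) auto
    also have "\<dots> = h (lf c0 + cntS lf R g u0) * ?P g u0"
      by (auto simp: cnt intro!: prod.cong)
    finally show ?thesis .
  qed
  have "TT h N lf (insert c0 R) = (\<Sum>x\<in>{..<N} \<times> (R \<rightarrow>\<^sub>E {..<N}). \<Prod>u<N. h (cntS lf (insert c0 R) ((\<lambda>(y, g). g(c0 := y)) x) u))"
    unfolding TT_def PiE_insert_eq
    by (subst sum.reindex) (use inj_combinator[OF c0, of "\<lambda>_. {..<N}"] in \<open>auto simp: comp_def\<close>)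
  also have "\<dots> = (\<Sum>u0<N. \<Sum>g\<in>R \<rightarrow>\<^sub>E {..<N}. \<Prod>u<N. h (cntS lf (insert c0 R) (g(c0 := u0)) u))"
    by (subst sum.cartesian_product) (simp add: case_prod_unfold)
  also have "\<dots> = (\<Sum>u0<N. \<Sum>g\<in>R \<rightarrow>\<^sub>E {..<N}. h (lf c0 + cntS lf R g u0) * ?P g u0)"
    using step2 by (intro sum.cong) auto
  also have "\<dots> \<le> (\<Sum>u0<N. \<Sum>A\<in>Pow R. h (lf c0 + sum lf A) * TT h N lf (R - A))"
  proof (intro sum_mono)
    fix u0 assume u0: "u0 \<in> {..<N}"
    have "(\<Sum>g\<in>R \<rightarrow>\<^sub>E {..<N}. h (lf c0 + cntS lf R g u0) * ?P g u0) =
      (\<Sum>A\<in>Pow R. \<Sum>g\<in>{g \<in> R \<rightarrow>\<^sub>E {..<N}. {c\<in>R. g c = u0} = A}. h (lf c0 + cntS lf R g u0) * ?P g u0)"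
      using fin by (intro sum.group[symmetric]) (auto intro: finite_PiE)
    also have "\<dots> = (\<Sum>A\<in>Pow R. h (lf c0 + sum lf A) * (\<Sum>g\<in>{g \<in> R \<rightarrow>\<^sub>E {..<N}. {c\<in>R. g c = u0} = A}. ?P g u0))"
      by (intro sum.cong refl) (auto simp: sum_distrib_left cntS_def intro!: sum.cong)
    also have "\<dots> \<le> (\<Sum>A\<in>Pow R. h (lf c0 + sum lf A) * TT h N lf (R - A))"
      using u0 by (intro sum_mono mult_left_mono fiber_le fin h0 hnn) auto
    finally show "(\<Sum>g\<in>R \<rightarrow>\<^sub>E {..<N}. h (lf c0 + cntS lf R g u0) * ?P g u0) \<le> \<dots>" .
  qed
  also have "\<dots> = real N * (\<Sum>A\<in>Pow R. h (lf c0 + sum lf A) * TT h N lf (R - A))"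
    by simp
  finally show ?thesis .
qed



lemma pow_bound:
  fixes x :: real
  assumes "0 \<le> x" "real n * x \<le> 1"
  shows "(1 + x) ^ n \<le> 1 + real n * x + (real n)^2 * x^2"
  using assms(2)
proof (induction n)
  case 0 then show ?case by simp
next
  case (Suc n)
  have nx: "real n * x \<le> 1" using Suc.prems assms(1) by (simp add: algebra_simps) 
  have IH: "(1 + x) ^ n \<le> 1 + real n * x + (real n)^2 * x^2" using Suc.IH nx by simp
  have "(1 + x) ^ Suc n = (1 + x)^n * (1 + x)" by simp
  also have "\<dots> \<le> (1 + real n * x + (real n)^2 * x^2) * (1 + x)"
    using IH assms(1) by (intro mult_right_mono) auto
  also have "\<dots> \<le> 1 + real (Suc n) * x + (real (Suc n))^2 * x^2"
  proof -
    have "(real n)^2 * x^3 \<le> real n * x^2"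
    proof -
      have "(real n)^2 * x^3 = (real n * x) * (real n * x^2)" by (simp add: power2_eq_square power3_eq_cube)
      also have "\<dots> \<le> 1 * (real n * x^2)" using nx assms(1) by (intro mult_right_mono) auto
      finally show ?thesis by simp
    qed
    thus ?thesis by (simp add: algebra_simps power2_eq_square power3_eq_cube) (rule add_increasing, simp_all)
  qed
  finally show ?case .
qed

lemma dfact_pos: "dfact n > 0"
  by (induction n rule: dfact.induct) auto

lemma dfact_Suc_mono: "dfact n \<le> dfact (Suc n)"
proof (induction n rule: less_induct)
  case (less n)
  show ?case
  proof (cases n)
    case 0 then show ?thesis by simp
  next
    case (Suc j)
    then show ?thesis
    proof (cases j)
      case 0 then show ?thesis using Suc by simp
    next
      case (Suc i)
      have "dfact i \<le> dfact (Suc i)" using less \<open>n = Suc j\<close> Suc by simp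
      hence "Suc (Suc i) * dfact i \<le> Suc (Suc (Suc i)) * dfact (Suc i)" by (intro mult_le_mono) auto
      then show ?thesis using \<open>n = Suc j\<close> Suc by (simp only: dfact.simps)
    qed
  qed
qed

lemma dfact_mono: "m \<le> n \<Longrightarrow> dfact m \<le> dfact n"
  by (rule lift_Suc_mono_le[of dfact]) (auto intro: dfact_Suc_mono)

lemma dfact_Suc_le: "dfact (Suc n) \<le> Suc n * dfact n"
proof (cases n)
  case 0 then show ?thesis by simp
next
  case (Suc j)
  have "Suc (Suc j) * dfact j \<le> Suc (Suc j) * dfact (Suc j)" using dfact_Suc_mono[of j] by (intro mult_le_mono) auto
  then show ?thesis using Suc by (simp only: dfact.simps)
qed

lemma arith_fixed:
  fixes \<epsilon> :: real
  assumes e: "0 < \<epsilon>" "\<epsilon> * (4 * real k ^ 2) \<le> 1" and pk: "p \<le> k" and mk: "m \<le> k" and k: "1 \<le> k"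
  shows "(real (dfact p) * ((1 + \<epsilon>^2)^m - 1) + real (dfact (p - 1)) * ((1 + \<epsilon>)^p - 1) * (1 + \<epsilon>^2)^m) / \<epsilon>
          \<le> real (dfact (Suc p))"
proof -
  have K: "real p \<le> real k" "real m \<le> real k" "1 \<le> real k" using pk mk k by auto
  have kk: "real k \<le> real k ^ 2" using K(3) by (simp add: power2_eq_square)
  have ke: "real k ^ 2 * \<epsilon> \<le> 1/4" using e(2) by (simp add: algebra_simps)
  have pe: "real p * \<epsilon> \<le> 1/4"
  proof -
    have "real p * \<epsilon> \<le> real k ^ 2 * \<epsilon>" using K kk e by (intro mult_right_mono) auto
    thus ?thesis using ke by linarith
  qed
  have me: "real m * \<epsilon> \<le> 1/4"
  proof -
    have "real m * \<epsilon> \<le> real k ^ 2 * \<epsilon>" using K kk e by (intro mult_right_mono) auto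
    thus ?thesis using ke by linarith
  qed
  have pme: "real p * real m * \<epsilon> \<le> 1/4"
  proof -
    have "real p * real m \<le> real k * real k" using K by (intro mult_mono) auto
    hence "real p * real m * \<epsilon> \<le> real k ^ 2 * \<epsilon>" using e by (simp add: power2_eq_square mult_right_mono)
    thus ?thesis using ke by linarith
  qed
  have ppe: "real p * real p * \<epsilon> \<le> 1/4"
  proof -
    have "real p * real p \<le> real k * real k" using K by (intro mult_mono) auto
    hence "real p * real p * \<epsilon> \<le> real k ^ 2 * \<epsilon>" using e by (simp add: power2_eq_square mult_right_mono)
    thus ?thesis using ke by linarith
  qed
  have e1: "\<epsilon> \<le> 1/4"
  proof -
    have "1 \<le> real k ^ 2" using kk K(3) by linarith
    hence "1 * \<epsilon> \<le> real k ^ 2 * \<epsilon>" using e by (intro mult_right_mono) auto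
    thus ?thesis using ke by linarith
  qed
  define X where "X = (1 + \<epsilon>^2)^m - 1"
  define Y where "Y = (1 + \<epsilon>)^p - 1"
  have me2: "real m * \<epsilon>^2 \<le> 1"
  proof -
    have "real m * \<epsilon>^2 = (real m * \<epsilon>) * \<epsilon>" by (simp add: power2_eq_square)
    also have "\<dots> \<le> (1/4) * (1/4)" using me e1 e by (intro mult_mono) auto
    finally show ?thesis by simp
  qed
  have X0: "0 \<le> X" unfolding X_def using e by simp
  have Y0: "0 \<le> Y" unfolding Y_def using e by simp
  have Xb: "X \<le> real m * \<epsilon>^2 + (real m)^2 * (\<epsilon>^2)^2"
    using pow_bound[of "\<epsilon>^2" m] me2 unfolding X_def by simp
  have Yb: "Y \<le> real p * \<epsilon> + (real p)^2 * \<epsilon>^2"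
    using pow_bound[of "\<epsilon>" p] pe e unfolding Y_def by simp
  have Xe: "X / \<epsilon> \<le> 2 * (real m * \<epsilon>)"
  proof -
    have "(real m)^2 * (\<epsilon>^2)^2 \<le> real m * \<epsilon>^2"
    proof -
      have "(real m)^2 * (\<epsilon>^2)^2 = (real m * \<epsilon>^2) * (real m * \<epsilon>^2)" by (simp add: power2_eq_square)
      also have "\<dots> \<le> 1 * (real m * \<epsilon>^2)" using me2 e by (intro mult_right_mono) auto
      finally show ?thesis by simp
    qed
    hence "X \<le> 2 * (real m * \<epsilon>) * \<epsilon>" using Xb by (simp add: power2_eq_square)
    thus ?thesis using e by (simp add: divide_le_eq)
  qed
  have Ye: "Y / \<epsilon> \<le> real p + 1/4"
  proof -
    have "Y \<le> (real p + real p * real p * \<epsilon>) * \<epsilon>" using Yb by (simp add: power2_eq_square algebra_simps)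
    hence "Y / \<epsilon> \<le> real p + real p * real p * \<epsilon>" using e by (simp add: divide_le_eq)
    thus ?thesis using ppe by linarith
  qed
  show ?thesis
  proof (cases p)
    case 0
    have "X / \<epsilon> \<le> 1" using Xe me by linarith
    thus ?thesis using 0 unfolding X_def by simp
  next
    case (Suc q)
    have d1: "real (dfact p) \<le> real p * real (dfact q)" using dfact_Suc_le[of q] Suc
      by (metis of_nat_le_iff of_nat_mult)
    have d2: "real (dfact (Suc p)) = real (Suc p) * real (dfact q)" using Suc by (simp add: algebra_simps)
    have dq: "0 < real (dfact q)" using dfact_pos by simp
    have "(real (dfact p) * X + real (dfact (p - 1)) * Y * (1 + X)) / \<epsilon>
        = real (dfact p) * (X / \<epsilon>) + real (dfact q) * (Y / \<epsilon>) + real (dfact q) * ((Y / \<epsilon>) * X)"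
      using Suc by (simp add: add_divide_distrib algebra_simps)
    also have "\<dots> \<le> real (dfact q) * (real p * (2 * (real m * \<epsilon>))) + real (dfact q) * (real p + 1/4) + real (dfact q) * (1/4)"
    proof -
      have a: "real (dfact p) * (X / \<epsilon>) \<le> (real p * real (dfact q)) * (2 * (real m * \<epsilon>))"
        using d1 Xe X0 e by (intro mult_mono) auto
      have b: "real (dfact q) * (Y / \<epsilon>) \<le> real (dfact q) * (real p + 1/4)"
        using Ye dq by (intro mult_left_mono) auto
      have "(Y / \<epsilon>) * X \<le> (real p + 1/4) * (2 * (real m * \<epsilon>) * \<epsilon>)"
        using Ye Xe X0 Y0 e by (intro mult_mono) (auto simp: divide_le_eq mult.commute)
      also have "\<dots> = 2 * (real p * real m * \<epsilon>) * \<epsilon> + (real m * \<epsilon>) * \<epsilon> / 2" by (simp add: algebra_simps)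
      also have "\<dots> \<le> 2 * (1/4) * (1/4) + (1/4) * (1/4) / 2"
        using pme me e1 e by (intro add_mono mult_mono divide_right_mono) auto
      also have "\<dots> \<le> 1/4" by simp
      finally have c: "real (dfact q) * ((Y / \<epsilon>) * X) \<le> real (dfact q) * (1/4)"
        using dq by (intro mult_left_mono) auto
      show ?thesis using a b c by (simp only: algebra_simps)
    qed
    also have "\<dots> = real (dfact q) * (2 * (real p * real m * \<epsilon>) + real p + 1/2)" by (simp add: algebra_simps)
    also have "\<dots> \<le> real (dfact q) * (real p + 1)"
      using pme dq by (intro mult_left_mono) auto
    also have "\<dots> = real (dfact (Suc p))" using d2 by simp
    finally show ?thesis unfolding X_def Y_def by simp
  qed
qed



lemma sum_pow_Pow:
  fixes x :: real
  assumes "finite X"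
  shows "(\<Sum>A\<in>Pow X. x ^ (\<Sum>c\<in>A. w c)) = (\<Prod>c\<in>X. 1 + x ^ w c)"
proof -
  have "(\<Prod>c\<in>X. x ^ w c + 1) = (\<Sum>A\<in>Pow X. (\<Prod>c\<in>A. x ^ w c) * (\<Prod>c\<in>X - A. 1))"
    by (rule prod_add[OF assms])
  thus ?thesis by (simp add: power_sum add.commute)
qed

lemma sum_pow_card_Pow:
  fixes x :: real
  assumes "finite X"
  shows "(\<Sum>A\<in>Pow X. x ^ card A) = (1 + x) ^ card X"
  using sum_pow_Pow[OF assms, of x "\<lambda>_. 1"] by simp

lemma exp_eq: "a + b = c \<Longrightarrow> (x::real) ^ a * x ^ b = x ^ c"
  by (metis power_add)

lemma TT_bound:
  fixes h :: "nat \<Rightarrow> real" and lf :: "'c \<Rightarrow> nat"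
  assumes h0: "h 0 = 1" and h1: "h 1 = 0" and hnn: "\<And>n. 0 \<le> h n"
    and hb: "\<And>n. 2 \<le> n \<Longrightarrow> h n \<le> (\<epsilon> * s) ^ (n - 2)"
    and s: "0 < s" and N: "real N = s^2" and e: "0 < \<epsilon>" "\<epsilon> * (4 * real k ^ 2) \<le> 1" and k: "1 \<le> k"
  shows "finite S \<Longrightarrow> (\<forall>c\<in>S. 1 \<le> lf c) \<Longrightarrow> sum lf S \<le> k \<Longrightarrow>
    TT h N lf S \<le> real (dfact (card {c\<in>S. lf c = 1})) * ((1 + \<epsilon>^2)^k) ^ (card {c\<in>S. 2 \<le> lf c})
       * \<epsilon> ^ (\<Sum>c\<in>S. lf c - 2) * s ^ (sum lf S)"
proof (induction "card S" arbitrary: S rule: less_induct)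
  case less
  define \<rho> where "\<rho> = (1 + \<epsilon>^2)^k"
  have \<rho>1: "1 \<le> \<rho>" unfolding \<rho>_def using e by simp
  have cardS: "card S \<le> k"
  proof -
    have "card S = (\<Sum>c\<in>S. 1::nat)" by simp
    also have "\<dots> \<le> sum lf S" using less.prems(2) by (intro sum_mono) auto
    finally show ?thesis using less.prems(3) by linarith
  qed
  have Ef_split: "(\<Sum>c\<in>X. lf c - 2) = (\<Sum>c\<in>Y. lf c - 2) + (\<Sum>c\<in>X - Y. lf c - 2)"
    if "Y \<subseteq> X" "finite X" for X Y
    using that by (metis (no_types, lifting) add.commute sum.subset_diff)
  have lf_split: "sum lf X = sum lf Y + sum lf (X - Y)" if "Y \<subseteq> X" "finite X" for X Y
    using that by (metis (no_types, lifting) add.commute sum.subset_diff)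
  show ?case
  proof (cases "S = {}")
    case True
    then show ?thesis using TT_empty[of h N lf, OF h0] by simp
  next
    case False
    show ?thesis
    proof (cases "\<exists>c0\<in>S. lf c0 = 1")
      case True
      then obtain c0 where c0: "c0 \<in> S" "lf c0 = 1" by blast
      define R where "R = S - {c0}"
      have SR: "S = insert c0 R" "c0 \<notin> R" and finR: "finite R" using c0 less.prems(1) unfolding R_def by auto
      have R1: "\<forall>c\<in>R. 1 \<le> lf c" using less.prems(2) unfolding R_def by auto
      define F where "F = {c\<in>R. lf c = 1}"
      define G where "G = {c\<in>R. 2 \<le> lf c}"
      define p where "p = card F"
      define m where "m = card G"
      define wt where "wt c = (if lf c = 1 then 1 else 2::nat)" for c
      define Wt where "Wt A = (\<Sum>c\<in>A. wt c)" for A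
      define Ef where "Ef A = (\<Sum>c\<in>A. lf c - 2)" for A
      have RFG: "R = F \<union> G" "F \<inter> G = {}" using R1 unfolding F_def G_def by force+
      have finF: "finite F" and finG: "finite G" using finR unfolding F_def G_def by auto
      have lfA: "sum lf A = Wt A + Ef A" if "A \<subseteq> R" for A
      proof -
        have A1: "\<forall>c\<in>A. 1 \<le> lf c" using that R1 by auto
        have "sum lf A = (\<Sum>c\<in>A. wt c + (lf c - 2))"
        proof (intro sum.cong refl)
          fix c assume "c \<in> A"
          hence "1 \<le> lf c" using A1 by auto
          thus "lf c = wt c + (lf c - 2)" unfolding wt_def by auto
        qed
        thus ?thesis unfolding Wt_def Ef_def by (simp add: sum.distrib)
      qed
      have WtA: "1 \<le> Wt A" if AR0: "A \<subseteq> R" and AN0: "A \<noteq> {}" for A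
      proof -
        obtain a where "a \<in> A" using AN0 by auto
        moreover have "finite A" using AR0 finR finite_subset by auto
        ultimately have "wt a \<le> Wt A" unfolding Wt_def by (intro member_le_sum) auto
        thus ?thesis unfolding wt_def by (auto split: if_splits)
      qed
      have c1S: "card {c\<in>S. lf c = 1} = Suc p"
      proof -
        have "{c\<in>S. lf c = 1} = insert c0 F" using SR c0 unfolding F_def by auto
        thus ?thesis unfolding p_def using SR finF F_def by simp
      qed
      have mS: "{c\<in>S. 2 \<le> lf c} = G" using SR c0 unfolding G_def by auto
      have ES: "(\<Sum>c\<in>S. lf c - 2) = Ef R" unfolding Ef_def using SR finR c0 by simp
      have lfS: "sum lf S = Suc (sum lf R)" using SR finR c0 by simp
      have pk: "p \<le> k" and mk: "m \<le> k"
      proof -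
        have "card R \<le> k" using cardS SR finR by simp
        moreover have "p \<le> card R" "m \<le> card R" unfolding p_def m_def F_def G_def using finR
          by (auto intro: card_mono)
        ultimately show "p \<le> k" "m \<le> k" by auto
      qed
      define K where "K = \<rho>^m * \<epsilon>^(Ef R) * s^(Suc (sum lf R))"
      define D where "D A = (if A \<inter> F = {} then dfact p else dfact (p - 1))" for A
      have K0: "0 \<le> K" unfolding K_def using \<rho>1 e s by simp
      have tm: "real N * h (lf c0 + sum lf A) * TT h N lf (R - A) \<le>
                  K / \<epsilon> * (if A = {} then 0 else \<epsilon> ^ (Wt A) * real (D A))" if A: "A \<in> Pow R" for A
      proof (cases "A = {}")
        case True
        then show ?thesis using h1 c0 by simp
      next
        case False
        have AR: "A \<subseteq> R" using A by auto
        have a1: "1 \<le> Wt A" using WtA AR False by auto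
        have IH: "TT h N lf (R - A) \<le> real (dfact (card {c\<in>R - A. lf c = 1})) * \<rho> ^ (card {c\<in>R - A. 2 \<le> lf c})
            * \<epsilon> ^ (\<Sum>c\<in>R - A. lf c - 2) * s ^ (sum lf (R - A))"
        proof -
          have "card (R - A) \<le> card R" using finR by (intro card_mono) auto
          hence i1: "card (R - A) < card S" using SR finR by simp
          have i4: "sum lf (R - A) \<le> k" using lf_split[OF AR finR] lfS less.prems(3) by linarith
          have i2: "finite (R - A)" and i3: "\<forall>c\<in>R - A. 1 \<le> lf c" using finR R1 by auto
          show ?thesis unfolding \<rho>_def by (rule less.hyps[OF i1 i2 i3 i4])
        qed
        have Dle: "dfact (card {c\<in>R - A. lf c = 1}) \<le> D A"
        proof (cases "A \<inter> F = {}")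
          case True
          hence e0: "{c\<in>R - A. lf c = 1} = F" unfolding F_def by blast
          have "D A = dfact p" using True unfolding D_def by simp
          thus ?thesis unfolding e0 p_def by simp
        next
          case False
          have e0: "{c\<in>R - A. lf c = 1} = F - A" unfolding F_def by blast
          have "F - A \<subset> F" using False by blast
          hence "card (F - A) < card F" using finF by (rule psubset_card_mono[rotated])
          hence "card (F - A) \<le> p - 1" unfolding p_def by linarith
          hence "dfact (card (F - A)) \<le> dfact (p - 1)" by (rule dfact_mono)
          moreover have "D A = dfact (p - 1)" using False unfolding D_def by simp
          ultimately show ?thesis unfolding e0 by simp
        qed
        have rle: "\<rho> ^ (card {c\<in>R - A. 2 \<le> lf c}) \<le> \<rho> ^ m"
          unfolding m_def G_def using \<rho>1 finR by (intro power_increasing card_mono) auto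
        define er where "er = Ef (R - A)"
        define r where "r = sum lf (R - A)"
        have hA: "h (lf c0 + sum lf A) \<le> (\<epsilon> * s) ^ (sum lf A - 1)"
          using hb[of "lf c0 + sum lf A"] c0 lfA[OF AR] a1 by auto
        have "real N * h (lf c0 + sum lf A) * TT h N lf (R - A) \<le>
              s^2 * (\<epsilon> * s) ^ (sum lf A - 1) * (real (D A) * \<rho> ^ m * \<epsilon> ^ er * s ^ r)"
        proof -
          have "real (dfact (card {c\<in>R - A. lf c = 1})) * \<rho> ^ (card {c\<in>R - A. 2 \<le> lf c})
              \<le> real (D A) * \<rho> ^ m"
            using Dle rle \<rho>1 by (intro mult_mono) auto
          hence "real (dfact (card {c\<in>R - A. lf c = 1})) * \<rho> ^ (card {c\<in>R - A. 2 \<le> lf c}) * (\<epsilon> ^ er * s ^ r)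
              \<le> real (D A) * \<rho> ^ m * (\<epsilon> ^ er * s ^ r)"
            using e s by (intro mult_right_mono) auto
          moreover have "TT h N lf (R - A) \<le> real (dfact (card {c\<in>R - A. lf c = 1})) * \<rho> ^ (card {c\<in>R - A. 2 \<le> lf c}) * (\<epsilon> ^ er * s ^ r)"
            using IH unfolding er_def r_def Ef_def by (simp only: mult.assoc)
          ultimately have "TT h N lf (R - A) \<le> real (D A) * \<rho> ^ m * \<epsilon> ^ er * s ^ r"
            by (simp only: mult.assoc)
          thus ?thesis using hA N hnn TT_nonneg[of h, OF hnn] e s
            by (intro mult_mono) auto
        qed
        also have "\<dots> = K / \<epsilon> * (\<epsilon> ^ (Wt A) * real (D A))"
        proof -
          have n1: "sum lf A - 1 + er = Ef R + (Wt A - 1)"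
            using lfA[OF AR] a1 Ef_split[OF AR finR] unfolding er_def Ef_def by linarith
          have e1: "\<epsilon> ^ (sum lf A - 1) * \<epsilon> ^ er = \<epsilon> ^ Ef R * \<epsilon> ^ (Wt A - 1)"
            by (simp only: power_add[symmetric] n1)
          have n2: "2 + (sum lf A - 1) + r = Suc (sum lf R)"
            using lfA[OF AR] a1 lf_split[OF AR finR] unfolding r_def by linarith
          have e2: "s^2 * s ^ (sum lf A - 1) * s ^ r = s ^ Suc (sum lf R)"
            by (simp only: power_add[symmetric] n2)
          have e3: "\<epsilon> ^ (Wt A) = \<epsilon> * \<epsilon> ^ (Wt A - 1)" using a1
            by (metis Suc_diff_le diff_Suc_1 power_Suc)
          have "s^2 * (\<epsilon> * s) ^ (sum lf A - 1) * (real (D A) * \<rho> ^ m * \<epsilon> ^ er * s ^ r)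
              = real (D A) * \<rho> ^ m * (\<epsilon> ^ (sum lf A - 1) * \<epsilon> ^ er) * (s^2 * s ^ (sum lf A - 1) * s ^ r)"
            by (simp add: power_mult_distrib mult_ac)
          also have "\<dots> = real (D A) * \<rho> ^ m * (\<epsilon> ^ Ef R * \<epsilon> ^ (Wt A - 1)) * s ^ Suc (sum lf R)"
            using e1 e2 by simp
          also have "\<dots> = K / \<epsilon> * (\<epsilon> ^ (Wt A) * real (D A))"
          proof -
            have "K / \<epsilon> * (\<epsilon> * \<epsilon> ^ (Wt A - 1) * real (D A)) = K * \<epsilon> ^ (Wt A - 1) * real (D A)"
              using e by simp
            thus ?thesis unfolding e3 K_def by (simp only: mult_ac)
          qed
          finally show ?thesis .
        qed
        finally show ?thesis using False by simp
      qed
      have "TT h N lf S \<le> real N * (\<Sum>A\<in>Pow R. h (lf c0 + sum lf A) * TT h N lf (R - A))"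
        unfolding SR(1) by (rule TT_insert_le[where h=h, OF finR SR(2) h0 hnn])
      also have "\<dots> = (\<Sum>A\<in>Pow R. real N * h (lf c0 + sum lf A) * TT h N lf (R - A))"
        by (simp add: sum_distrib_left mult_ac)
      also have "\<dots> \<le> (\<Sum>A\<in>Pow R. K / \<epsilon> * (if A = {} then 0 else \<epsilon> ^ (Wt A) * real (D A)))"
        by (intro sum_mono tm)
      also have "\<dots> = K / \<epsilon> * (\<Sum>A\<in>Pow R. (if A = {} then 0 else \<epsilon> ^ (Wt A) * real (D A)))"
        by (simp add: sum_distrib_left)
      also have "(\<Sum>A\<in>Pow R. (if A = {} then 0 else \<epsilon> ^ (Wt A) * real (D A))) =
          real (dfact p) * ((1 + \<epsilon>^2)^m - 1) + real (dfact (p - 1)) * ((1 + \<epsilon>)^p - 1) * (1 + \<epsilon>^2)^m"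
      proof -
        define \<phi> where "\<phi> A = (if A = {} then 0 else \<epsilon> ^ (Wt A) * real (D A))" for A
        define Q where "Q = {A\<in>Pow R. A \<inter> F \<noteq> {}}"
        have PowR: "Pow R = Pow G \<union> Q" "Pow G \<inter> Q = {}" unfolding Q_def using RFG by auto
        have finQ: "finite Q" "finite (Pow G)" unfolding Q_def using finR finG by auto
        have PR: "(\<Sum>A\<in>Pow R. \<epsilon> ^ Wt A) = (1 + \<epsilon>)^p * (1 + \<epsilon>^2)^m"
        proof -
          have "(\<Sum>A\<in>Pow R. \<epsilon> ^ Wt A) = (\<Prod>c\<in>R. 1 + \<epsilon> ^ wt c)"
            unfolding Wt_def by (rule sum_pow_Pow[OF finR])
          also have "\<dots> = (\<Prod>c\<in>F. 1 + \<epsilon> ^ wt c) * (\<Prod>c\<in>G. 1 + \<epsilon> ^ wt c)"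
            unfolding RFG(1) using finF finG RFG(2) by (rule prod.union_disjoint)
          also have "(\<Prod>c\<in>F. 1 + \<epsilon> ^ wt c) = (\<Prod>c\<in>F. 1 + \<epsilon>)"
            by (intro prod.cong) (auto simp: wt_def F_def)
          also have "(\<Prod>c\<in>G. 1 + \<epsilon> ^ wt c) = (\<Prod>c\<in>G. 1 + \<epsilon>^2)"
            by (intro prod.cong) (auto simp: wt_def G_def)
          finally show ?thesis unfolding p_def m_def by simp
        qed
        have PG: "(\<Sum>A\<in>Pow G. \<epsilon> ^ Wt A) = (1 + \<epsilon>^2)^m"
        proof -
          have "(\<Sum>A\<in>Pow G. \<epsilon> ^ Wt A) = (\<Prod>c\<in>G. 1 + \<epsilon> ^ wt c)"
            unfolding Wt_def by (rule sum_pow_Pow[OF finG])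
          also have "\<dots> = (\<Prod>c\<in>G. 1 + \<epsilon>^2)"
            by (intro prod.cong) (auto simp: wt_def G_def)
          finally show ?thesis unfolding m_def by simp
        qed
        have PQ: "(\<Sum>A\<in>Q. \<epsilon> ^ Wt A) = (1 + \<epsilon>)^p * (1 + \<epsilon>^2)^m - (1 + \<epsilon>^2)^m"
          using PR PG sum.union_disjoint[OF finQ(2) finQ(1) PowR(2), of "\<lambda>A. \<epsilon> ^ Wt A"] PowR(1) by simp
        have s1: "(\<Sum>A\<in>Pow G. \<phi> A) = real (dfact p) * ((1 + \<epsilon>^2)^m - 1)"
        proof -
          have "(\<Sum>A\<in>Pow G. \<phi> A) = (\<Sum>A\<in>Pow G. (if A = {} then 0 else \<epsilon> ^ Wt A) * real (dfact p))"
            using RFG by (intro sum.cong) (auto simp: \<phi>_def D_def)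
          also have "\<dots> = real (dfact p) * (\<Sum>A\<in>Pow G. (if A = {} then 0 else \<epsilon> ^ Wt A))"
            by (simp add: sum_distrib_left mult_ac)
          also have "(\<Sum>A\<in>Pow G. (if A = {} then 0 else \<epsilon> ^ Wt A)) = (\<Sum>A\<in>Pow G. \<epsilon> ^ Wt A) - 1"
          proof -
            have "(\<Sum>A\<in>Pow G. (if A = {} then 0 else \<epsilon> ^ Wt A)) = (\<Sum>A\<in>Pow G - {{}}. \<epsilon> ^ Wt A)"
              using finQ by (subst sum.remove[of _ "{}"]) (auto intro!: sum.cong)
            also have "\<dots> = (\<Sum>A\<in>Pow G. \<epsilon> ^ Wt A) - \<epsilon> ^ Wt {}"
              using finQ by (subst sum.remove[of "Pow G" "{}"]) auto
            finally show ?thesis by (simp add: Wt_def)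
          qed
          finally show ?thesis using PG by simp
        qed
        have s2: "(\<Sum>A\<in>Q. \<phi> A) = real (dfact (p - 1)) * ((1 + \<epsilon>)^p * (1 + \<epsilon>^2)^m - (1 + \<epsilon>^2)^m)"
        proof -
          have "(\<Sum>A\<in>Q. \<phi> A) = (\<Sum>A\<in>Q. \<epsilon> ^ Wt A * real (dfact (p - 1)))"
            by (intro sum.cong) (auto simp: \<phi>_def D_def Q_def)
          thus ?thesis using PQ by (simp add: sum_distrib_right[symmetric] mult.commute)
        qed
        have "(\<Sum>A\<in>Pow R. \<phi> A) = (\<Sum>A\<in>Pow G. \<phi> A) + (\<Sum>A\<in>Q. \<phi> A)"
          unfolding PowR(1) by (rule sum.union_disjoint[OF finQ(2) finQ(1) PowR(2)])
        thus ?thesis unfolding \<phi>_def[symmetric] using s1 s2 by (simp add: algebra_simps)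
      qed
      also have "K / \<epsilon> * (real (dfact p) * ((1 + \<epsilon>^2)^m - 1) + real (dfact (p - 1)) * ((1 + \<epsilon>)^p - 1) * (1 + \<epsilon>^2)^m)
          = K * ((real (dfact p) * ((1 + \<epsilon>^2)^m - 1) + real (dfact (p - 1)) * ((1 + \<epsilon>)^p - 1) * (1 + \<epsilon>^2)^m) / \<epsilon>)"
        by simp
      also have "\<dots> \<le> K * real (dfact (Suc p))"
        using arith_fixed[OF e pk mk k] K0 by (intro mult_left_mono) auto
      also have "\<dots> = real (dfact (card {c\<in>S. lf c = 1})) * \<rho> ^ (card {c\<in>S. 2 \<le> lf c})
       * \<epsilon> ^ (\<Sum>c\<in>S. lf c - 2) * s ^ (sum lf S)"
        unfolding c1S mS ES lfS K_def m_def by simp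
      finally show ?thesis unfolding \<rho>_def .
    next
      case False
      then have all2: "\<forall>c\<in>S. 2 \<le> lf c" using less.prems(2) by (metis One_nat_def Suc_1 Suc_leI le_neq_implies_less)
      obtain c0 where c0: "c0 \<in> S" using \<open>S \<noteq> {}\<close> by auto
      define R where "R = S - {c0}"
      have SR: "S = insert c0 R" "c0 \<notin> R" and finR: "finite R" using c0 less.prems(1) unfolding R_def by auto
      have R2: "\<forall>c\<in>R. 2 \<le> lf c" using all2 unfolding R_def by auto
      have lc0: "2 \<le> lf c0" using all2 c0 by auto
      have cR: "card R \<le> k" using cardS SR finR by simp
      have lfA: "sum lf A = 2 * card A + (\<Sum>c\<in>A. lf c - 2)" if "A \<subseteq> R" for A
      proof -
        have A2: "\<forall>c\<in>A. 2 \<le> lf c" using that R2 by auto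
        have "sum lf A = (\<Sum>c\<in>A. 2 + (lf c - 2))" using A2 by (intro sum.cong) auto
        also have "\<dots> = (\<Sum>c\<in>A. 2) + (\<Sum>c\<in>A. lf c - 2)" by (rule sum.distrib)
        finally show ?thesis by simp
      qed
      define K where "K = \<rho> ^ card R * \<epsilon> ^ (\<Sum>c\<in>S. lf c - 2) * s ^ sum lf S"
      have K0: "0 \<le> K" unfolding K_def using \<rho>1 e s by simp
      have tm: "real N * h (lf c0 + sum lf A) * TT h N lf (R - A) \<le> K * (\<epsilon>^2) ^ card A" if A: "A \<in> Pow R" for A
      proof -
        have AR: "A \<subseteq> R" using A by auto
        have IH: "TT h N lf (R - A) \<le> real (dfact (card {c\<in>R - A. lf c = 1})) * \<rho> ^ (card {c\<in>R - A. 2 \<le> lf c})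
            * \<epsilon> ^ (\<Sum>c\<in>R - A. lf c - 2) * s ^ (sum lf (R - A))"
        proof -
          have "card (R - A) \<le> card R" using finR by (intro card_mono) auto
          hence i1: "card (R - A) < card S" using SR finR by simp
          have "sum lf S = lf c0 + sum lf R" using SR finR by simp
          hence i4: "sum lf (R - A) \<le> k" using lf_split[OF AR finR] less.prems(3) by linarith
          have i2: "finite (R - A)" and i3: "\<forall>c\<in>R - A. 1 \<le> lf c" using finR R2 by auto
          show ?thesis unfolding \<rho>_def by (rule less.hyps[OF i1 i2 i3 i4])
        qed
        have z: "{c\<in>R - A. lf c = 1} = {}" using R2 by auto
        have z2: "{c\<in>R - A. 2 \<le> lf c} = R - A" using R2 by auto
        have rle: "\<rho> ^ card (R - A) \<le> \<rho> ^ card R"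
          using \<rho>1 finR by (intro power_increasing card_mono) auto
        define er where "er = (\<Sum>c\<in>R - A. lf c - 2)"
        define r where "r = sum lf (R - A)"
        have hA: "h (lf c0 + sum lf A) \<le> (\<epsilon> * s) ^ (lf c0 + sum lf A - 2)"
          using hb[of "lf c0 + sum lf A"] lc0 by auto
        have "real N * h (lf c0 + sum lf A) * TT h N lf (R - A) \<le>
              s^2 * (\<epsilon> * s) ^ (lf c0 + sum lf A - 2) * (\<rho> ^ card R * \<epsilon> ^ er * s ^ r)"
        proof -
          have "TT h N lf (R - A) \<le> \<rho> ^ card R * \<epsilon> ^ er * s ^ r"
            using IH rle e s unfolding er_def r_def z z2 by (simp add: mult_right_mono order_trans)
          thus ?thesis using hA N hnn TT_nonneg[of h, OF hnn] e s
            by (intro mult_mono) auto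
        qed
        also have "\<dots> = K * (\<epsilon>^2) ^ card A"
        proof -
          have ES: "(\<Sum>c\<in>S. lf c - 2) = (lf c0 - 2) + (\<Sum>c\<in>R. lf c - 2)" using SR finR by simp
          have n1: "(lf c0 + sum lf A - 2) + er = (\<Sum>c\<in>S. lf c - 2) + 2 * card A"
            using lfA[OF AR] lc0 Ef_split[OF AR finR] ES unfolding er_def by linarith
          have e1: "\<epsilon> ^ (lf c0 + sum lf A - 2) * \<epsilon> ^ er = \<epsilon> ^ (\<Sum>c\<in>S. lf c - 2) * (\<epsilon>^2) ^ card A"
            by (simp only: power_mult[symmetric] power_add[symmetric] n1)
          have "sum lf S = lf c0 + sum lf R" using SR finR by simp
          hence n2: "2 + (lf c0 + sum lf A - 2) + r = sum lf S"
            using lc0 lf_split[OF AR finR] unfolding r_def by linarith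
          have e2: "s^2 * s ^ (lf c0 + sum lf A - 2) * s ^ r = s ^ sum lf S"
            by (simp only: power_add[symmetric] n2)
          have "s^2 * (\<epsilon> * s) ^ (lf c0 + sum lf A - 2) * (\<rho> ^ card R * \<epsilon> ^ er * s ^ r)
              = \<rho> ^ card R * (\<epsilon> ^ (lf c0 + sum lf A - 2) * \<epsilon> ^ er) * (s^2 * s ^ (lf c0 + sum lf A - 2) * s ^ r)"
            by (simp add: power_mult_distrib mult_ac)
          also have "\<dots> = K * (\<epsilon>^2) ^ card A"
            using e1 e2 unfolding K_def by (simp add: mult_ac)
          finally show ?thesis .
        qed
        finally show ?thesis .
      qed
      have "TT h N lf S \<le> real N * (\<Sum>A\<in>Pow R. h (lf c0 + sum lf A) * TT h N lf (R - A))"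
        unfolding SR(1) by (rule TT_insert_le[where h=h, OF finR SR(2) h0 hnn])
      also have "\<dots> = (\<Sum>A\<in>Pow R. real N * h (lf c0 + sum lf A) * TT h N lf (R - A))"
        by (simp add: sum_distrib_left mult_ac)
      also have "\<dots> \<le> (\<Sum>A\<in>Pow R. K * (\<epsilon>^2) ^ card A)"
        by (intro sum_mono tm)
      also have "\<dots> = K * (1 + \<epsilon>^2) ^ card R"
        by (simp add: sum_distrib_left[symmetric] sum_pow_card_Pow[OF finR])
      also have "\<dots> \<le> K * \<rho>"
        unfolding \<rho>_def using cR e K0 by (intro mult_left_mono power_increasing) auto
      also have "\<dots> = real (dfact (card {c\<in>S. lf c = 1})) * \<rho> ^ (card {c\<in>S. 2 \<le> lf c})
       * \<epsilon> ^ (\<Sum>c\<in>S. lf c - 2) * s ^ (sum lf S)"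
      proof -
        have z1: "{c\<in>S. lf c = 1} = {}" and z2: "{c\<in>S. 2 \<le> lf c} = S" using all2 by auto
        have cs: "card S = Suc (card R)" using SR finR by simp
        show ?thesis unfolding K_def z1 z2 cs by (simp add: mult_ac)
      qed
      finally show ?thesis unfolding \<rho>_def .
    qed
  qed
qed



definition mu :: "real \<Rightarrow> nat \<Rightarrow> real" where
  "mu \<alpha> n = \<alpha> * ((1 - \<alpha>) / wB \<alpha>) ^ n + (1 - \<alpha>) * ((- \<alpha>) / wB \<alpha>) ^ n"

lemma wB_pos: "0 < \<alpha> \<Longrightarrow> \<alpha> < 1 \<Longrightarrow> 0 < wB \<alpha>"
  unfolding wB_def by simp

lemma wB_sq: "0 < \<alpha> \<Longrightarrow> \<alpha> < 1 \<Longrightarrow> (wB \<alpha>)^2 = \<alpha> * (1 - \<alpha>)"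
  unfolding wB_def by simp

lemma mu0: "mu \<alpha> 0 = 1" unfolding mu_def by simp

lemma mu1: "mu \<alpha> 1 = 0" unfolding mu_def by (simp add: field_simps)

lemma mu_bound:
  assumes a: "0 < \<alpha>" "\<alpha> < 1" and n: "2 \<le> n"
  shows "\<bar>mu \<alpha> n\<bar> \<le> (1 / wB \<alpha>) ^ (n - 2)"
proof -
  define w where "w = wB \<alpha>"
  have w: "0 < w" "w^2 = \<alpha> * (1 - \<alpha>)" using wB_pos[OF a] wB_sq[OF a] unfolding w_def by auto
  define x where "x = (1 - \<alpha>) / w"
  define y where "y = \<alpha> / w"
  have x0: "0 \<le> x" and y0: "0 \<le> y" unfolding x_def y_def using a w by auto
  have xle: "x \<le> 1 / w" unfolding x_def using a w by (simp add: divide_right_mono)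
  have yle: "y \<le> 1 / w" unfolding y_def using a w by (simp add: divide_right_mono)
  have ax2: "\<alpha> * x^2 = 1 - \<alpha>" unfolding x_def using w a
    by (simp add: power_divide) (simp add: field_simps power2_eq_square)
  have by2: "(1 - \<alpha>) * y^2 = \<alpha>" unfolding y_def using w a
    by (simp add: power_divide) (simp add: field_simps power2_eq_square)
  have nn: "n = 2 + (n - 2)" using n by simp
  have "\<bar>mu \<alpha> n\<bar> \<le> \<bar>\<alpha> * x ^ n\<bar> + \<bar>(1 - \<alpha>) * ((- \<alpha>) / w) ^ n\<bar>"
    unfolding mu_def x_def w_def by (rule abs_triangle_ineq)
  also have "\<bar>(1 - \<alpha>) * ((- \<alpha>) / w) ^ n\<bar> = (1 - \<alpha>) * y ^ n"
    unfolding y_def using a w by (simp add: abs_mult power_abs)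
  also have "\<bar>\<alpha> * x ^ n\<bar> = \<alpha> * x ^ n" using a x0 by simp
  also have "\<alpha> * x ^ n = (\<alpha> * x^2) * x ^ (n - 2)" by (subst nn) (simp add: power_add power2_eq_square)
  also have "(1 - \<alpha>) * y ^ n = ((1 - \<alpha>) * y^2) * y ^ (n - 2)" by (subst nn) (simp add: power_add power2_eq_square)
  also have "(\<alpha> * x^2) * x ^ (n - 2) + ((1 - \<alpha>) * y^2) * y ^ (n - 2)
      \<le> (1 - \<alpha>) * (1 / w) ^ (n - 2) + \<alpha> * (1 / w) ^ (n - 2)"
    unfolding ax2 by2 using a x0 y0 xle yle
    by (intro add_mono mult_left_mono power_mono) auto
  also have "\<dots> = (1 / wB \<alpha>) ^ (n - 2)" unfolding w_def by (simp add: algebra_simps)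
  finally show ?thesis .
qed

lemma expect_prod:
  assumes a: "0 < \<alpha>" "\<alpha> < 1"
  shows "measure_pmf.expectation (ber_vec N \<alpha>) (\<lambda>a. \<Prod>u<N. ((of_bool (a u) - \<alpha>) / wB \<alpha>) ^ (n u))
         = (\<Prod>u<N. mu \<alpha> (n u))"
proof -
  let ?M = "measure_pmf (ber_vec N \<alpha>)"
  let ?X = "\<lambda>u a. ((of_bool (a u) - \<alpha>) / wB \<alpha>) ^ (n u)"
  have ind0: "prob_space.indep_vars ?M (\<lambda>_. count_space UNIV) (\<lambda>x f. f x) {..<N}"
    unfolding ber_vec_def by (rule indep_vars_Pi_pmf) simp
  have ind: "prob_space.indep_vars ?M (\<lambda>_. borel) ?X {..<N}"
    using prob_space.indep_vars_compose2[OF prob_space_measure_pmf ind0, of "\<lambda>u b. ((of_bool b - \<alpha>) / wB \<alpha>) ^ (n u)" "\<lambda>_. borel"]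
    by simp
  have fin: "finite (set_pmf (ber_vec N \<alpha>))"
    unfolding ber_vec_def by (subst set_Pi_pmf) (auto intro!: finite_PiE_dflt)
  have int: "integrable ?M (?X u)" for u
    by (rule integrable_measure_pmf_finite[OF fin])
  have "measure_pmf.expectation (ber_vec N \<alpha>) (\<lambda>a. \<Prod>u<N. ?X u a) = (\<Prod>u<N. measure_pmf.expectation (ber_vec N \<alpha>) (?X u))"
    by (rule prob_space.indep_vars_lebesgue_integral[OF prob_space_measure_pmf _ ind int]) simp
  also have "\<dots> = (\<Prod>u<N. mu \<alpha> (n u))"
  proof (intro prod.cong refl)
    fix u assume u: "u \<in> {..<N}"
    have "measure_pmf.expectation (ber_vec N \<alpha>) (?X u) =
          measure_pmf.expectation (map_pmf (\<lambda>f. f u) (ber_vec N \<alpha>)) (\<lambda>b. ((of_bool b - \<alpha>) / wB \<alpha>) ^ (n u))"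
      by simp
    also have "map_pmf (\<lambda>f. f u) (ber_vec N \<alpha>) = bernoulli_pmf \<alpha>"
      unfolding ber_vec_def using u by (subst Pi_pmf_component) auto
    finally show "measure_pmf.expectation (ber_vec N \<alpha>) (?X u) = mu \<alpha> (n u)"
      using a unfolding mu_def by (simp add: algebra_simps)
  qed
  finally show ?thesis .
qed



context
  fixes \<sigma> :: "nat \<Rightarrow> nat" and k :: nat
  assumes perm: "\<sigma> permutes {..<k}"
begin

definition Om where "Om = {orbit \<sigma> x | x. x < k}"

lemma permut: "permutation \<sigma>" using perm by (auto simp: permutation_permutes)

lemma O1: "x \<in> orbit \<sigma> x" using permut by (rule permutation_self_in_orbit)

lemma O2: "y \<in> orbit \<sigma> x \<Longrightarrow> orbit \<sigma> y = orbit \<sigma> x"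
  using cyclic_on_orbit'[OF permut, of x] by (rule orbit_cyclic_eq3)

lemma O3: "x < k \<Longrightarrow> orbit \<sigma> x \<subseteq> {..<k}"
  using permutes_orbit_subset[OF perm] by auto

lemma O3': "Q \<in> Om \<Longrightarrow> Q \<subseteq> {..<k}" unfolding Om_def using O3 by auto

lemma Ofin: "finite (orbit \<sigma> x)" using O1 by (rule finite_orbit)

lemma O4: assumes "\<forall>j<k. i (\<sigma> j) = i j" "x < k" "y \<in> orbit \<sigma> x" shows "i y = i x"
  using assms(3)
proof induction
  case base then show ?case using assms(1,2) by auto
next
  case (step y)
  have "y < k" using step.hyps O3[OF assms(2)] by auto
  then show ?case using step.IH assms(1) by auto
qed

lemma Om_fin: "finite Om" unfolding Om_def by simp

lemma Om_elem_fin: "Q \<in> Om \<Longrightarrow> finite Q" unfolding Om_def using Ofin by auto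

lemma Om_card1: "Q \<in> Om \<Longrightarrow> 1 \<le> card Q"
  using Om_elem_fin[of Q] O1 unfolding Om_def by (auto simp: Suc_le_eq card_gt_0_iff)

lemma Om_disj: "pairwise disjnt Om"
  unfolding pairwise_def disjnt_def Om_def using O2 by blast

lemma Min_orbit: assumes "Q \<in> Om" shows "Min Q \<in> Q" "Min Q < k" "orbit \<sigma> (Min Q) = Q"
proof -
  obtain x where x: "x < k" "Q = orbit \<sigma> x" using assms unfolding Om_def by auto
  have ne: "Q \<noteq> {}" using O1 x by auto
  show m: "Min Q \<in> Q" using Om_elem_fin[OF assms] ne by simp
  show "Min Q < k" using m O3' assms by auto
  show "orbit \<sigma> (Min Q) = Q" using m x O2 by auto
qed

lemma count_orbits: "card {j. j < k \<and> b (orbit \<sigma> j) = u} = sum card {Q \<in> Om. b Q = u}"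
proof -
  have "{j. j < k \<and> b (orbit \<sigma> j) = u} = \<Union>{Q \<in> Om. b Q = u}"
  proof (intro equalityI subsetI)
    fix j assume "j \<in> {j. j < k \<and> b (orbit \<sigma> j) = u}"
    thus "j \<in> \<Union>{Q \<in> Om. b Q = u}" using O1[of j] unfolding Om_def by auto
  next
    fix j assume "j \<in> \<Union>{Q \<in> Om. b Q = u}"
    then obtain Q where Q: "Q \<in> Om" "b Q = u" "j \<in> Q" by auto
    then obtain x where x: "x < k" "Q = orbit \<sigma> x" unfolding Om_def by auto
    have "j < k" using O3 x Q by auto
    moreover have "orbit \<sigma> j = Q" using O2 x Q by auto
    ultimately show "j \<in> {j. j < k \<and> b (orbit \<sigma> j) = u}" using Q by auto
  qed
  also have "card \<dots> = sum card {Q \<in> Om. b Q = u}"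
    by (rule card_Union_disjoint) (use Om_disj Om_elem_fin in \<open>auto simp: pairwise_def\<close>)
  finally show ?thesis .
qed

lemma sum_card_Om: "sum card Om = k"
proof -
  have "\<Union>Om = {..<k}" using O3 O1 unfolding Om_def by blast
  hence "card (\<Union>Om) = k" by simp
  moreover have "card (\<Union>Om) = sum card Om"
    by (rule card_Union_disjoint) (use Om_disj Om_elem_fin in auto)
  ultimately show ?thesis by simp
qed

lemma f_le_TT:
  assumes a: "0 < \<alpha>" "\<alpha> < 1"
  shows "f_alpha N k \<alpha> \<sigma> \<le> TT (\<lambda>n. \<bar>mu \<alpha> n\<bar>) N card Om"
proof -
  define Comp where "Comp = {i \<in> {..<k} \<rightarrow>\<^sub>E {..<N}. \<forall>j<k. i (\<sigma> j) = i j}"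
  define cnt where "cnt i u = card {j. j < k \<and> i j = u}" for i :: "nat \<Rightarrow> nat" and u
  have E: "measure_pmf.expectation (ber_vec N \<alpha>) (\<lambda>a. \<Prod>j<k. ahat \<alpha> a (i j)) = (\<Prod>u<N. mu \<alpha> (cnt i u))"
    if i: "i \<in> Comp" for i
  proof -
    have "(\<Prod>j<k. ahat \<alpha> a (i j)) = (\<Prod>u<N. ((of_bool (a u) - \<alpha>) / wB \<alpha>) ^ (cnt i u))" for a
    proof -
      have "(\<Prod>j<k. ahat \<alpha> a (i j)) = (\<Prod>u<N. \<Prod>j\<in>{x \<in> {..<k}. i x = u}. ahat \<alpha> a (i j))"
        using i unfolding Comp_def by (intro prod.group[symmetric]) auto
      also have "\<dots> = (\<Prod>u<N. ((of_bool (a u) - \<alpha>) / wB \<alpha>) ^ (cnt i u))"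
        unfolding cnt_def ahat_def by (intro prod.cong refl) (simp add: lessThan_def)
      finally show ?thesis .
    qed
    thus ?thesis using expect_prod[OF a, of N "cnt i"] by simp
  qed
  have "f_alpha N k \<alpha> \<sigma> = \<bar>\<Sum>i\<in>Comp. \<Prod>u<N. mu \<alpha> (cnt i u)\<bar>"
    unfolding f_alpha_def Comp_def[symmetric] using E by (simp cong: sum.cong)
  also have "\<dots> \<le> (\<Sum>i\<in>Comp. \<Prod>u<N. \<bar>mu \<alpha> (cnt i u)\<bar>)"
    by (rule order_trans[OF sum_abs]) (simp add: abs_prod)
  also have "\<dots> = TT (\<lambda>n. \<bar>mu \<alpha> n\<bar>) N card Om"
    unfolding TT_def
  proof (rule sum.reindex_bij_witness[where i = "\<lambda>g j. if j < k then g (orbit \<sigma> j) else undefined"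
        and j = "\<lambda>i. restrict (\<lambda>Q. i (Min Q)) Om"])
    fix i assume i: "i \<in> Comp"
    show "(\<lambda>j. if j < k then restrict (\<lambda>Q. i (Min Q)) Om (orbit \<sigma> j) else undefined) = i"
    proof
      fix j show "(if j < k then restrict (\<lambda>Q. i (Min Q)) Om (orbit \<sigma> j) else undefined) = i j"
      proof (cases "j < k")
        case True
        have om: "orbit \<sigma> j \<in> Om" using True unfolding Om_def by auto
        have "i (Min (orbit \<sigma> j)) = i j"
          using O4[of i j "Min (orbit \<sigma> j)"] i Min_orbit(1)[OF om] True unfolding Comp_def by auto
        then show ?thesis using True om by simp
      next
        case False then show ?thesis using i unfolding Comp_def by (auto simp: PiE_def extensional_def)
      qed
    qed
    show "restrict (\<lambda>Q. i (Min Q)) Om \<in> Om \<rightarrow>\<^sub>E {..<N}"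
      using i Min_orbit(2) unfolding Comp_def by auto
    have "cntS card Om (restrict (\<lambda>Q. i (Min Q)) Om) u = cnt i u" for u
    proof -
      have "cnt i u = card {j. j < k \<and> restrict (\<lambda>Q. i (Min Q)) Om (orbit \<sigma> j) = u}"
      proof -
        have "{j. j < k \<and> restrict (\<lambda>Q. i (Min Q)) Om (orbit \<sigma> j) = u} = {j. j < k \<and> i j = u}"
        proof -
          have "restrict (\<lambda>Q. i (Min Q)) Om (orbit \<sigma> j) = i j" if "j < k" for j
          proof -
            have om: "orbit \<sigma> j \<in> Om" using that unfolding Om_def by auto
            have "i (Min (orbit \<sigma> j)) = i j"
              using O4[of i j "Min (orbit \<sigma> j)"] i Min_orbit(1)[OF om] that unfolding Comp_def by auto
            thus ?thesis using om by simp
          qed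
          thus ?thesis by (intro Collect_cong) (metis (no_types, lifting))
        qed
        thus ?thesis unfolding cnt_def by simp
      qed
      also have "\<dots> = cntS card Om (restrict (\<lambda>Q. i (Min Q)) Om) u"
        unfolding cntS_def by (rule count_orbits)
      finally show ?thesis by simp
    qed
    thus "(\<Prod>u<N. \<bar>mu \<alpha> (cntS card Om (restrict (\<lambda>Q. i (Min Q)) Om) u)\<bar>) = (\<Prod>u<N. \<bar>mu \<alpha> (cnt i u)\<bar>)"
      by simp
  next
    fix g assume g: "g \<in> Om \<rightarrow>\<^sub>E {..<N}"
    show "restrict (\<lambda>Q. (if Min Q < k then g (orbit \<sigma> (Min Q)) else undefined)) Om = g"
    proof
      fix Q show "restrict (\<lambda>Q. (if Min Q < k then g (orbit \<sigma> (Min Q)) else undefined)) Om Q = g Q"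
        using g Min_orbit[of Q] by (cases "Q \<in> Om") (auto simp: PiE_def extensional_def)
    qed
    show "(\<lambda>j. if j < k then g (orbit \<sigma> j) else undefined) \<in> Comp"
    proof -
      have "orbit \<sigma> j \<in> Om" if "j < k" for j using that unfolding Om_def by auto
      moreover have "\<sigma> j < k" if "j < k" for j using permutes_in_image[OF perm, of j] that by simp
      moreover have "orbit \<sigma> (\<sigma> j) = orbit \<sigma> j" for j using permut by (rule permutation_orbit_step)
      ultimately show ?thesis using g unfolding Comp_def by (auto split: if_splits)
    qed
  qed
  finally show ?thesis .
qed

end



lemma cyc_eq: "\<sigma> permutes {..<k} \<Longrightarrow> cyc_count k \<sigma> a = card {Q \<in> Om \<sigma> k. card Q = a}"
  unfolding cyc_count_def Om_def by (intro arg_cong[where f=card]) auto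

lemma cyc_ge_eq: "\<sigma> permutes {..<k} \<Longrightarrow> cyc_count_ge k \<sigma> a = card {Q \<in> Om \<sigma> k. a \<le> card Q}"
  unfolding cyc_count_ge_def Om_def by (intro arg_cong[where f=card]) auto

lemma E_eq:
  assumes perm: "\<sigma> permutes {..<k}"
  shows "(\<Sum>a=3..k. (a - 2) * cyc_count k \<sigma> a) = (\<Sum>Q\<in>Om \<sigma> k. card Q - 2)"
proof -
  have fin: "finite (Om \<sigma> k)" using Om_fin[OF perm] .
  have "(\<Sum>Q\<in>Om \<sigma> k. card Q - 2) = (\<Sum>Q\<in>{Q \<in> Om \<sigma> k. 3 \<le> card Q}. card Q - 2)"
    using fin by (intro sum.mono_neutral_right) auto
  also have "\<dots> = (\<Sum>a\<in>{3..k}. \<Sum>Q\<in>{Q \<in> {Q \<in> Om \<sigma> k. 3 \<le> card Q}. card Q = a}. card Q - 2)"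
  proof (rule sum.group[symmetric])
    show "finite {Q \<in> Om \<sigma> k. 3 \<le> card Q}" using fin by simp
    show "finite {3..k}" by simp
    show "card ` {Q \<in> Om \<sigma> k. 3 \<le> card Q} \<subseteq> {3..k}"
    proof
      fix x assume "x \<in> card ` {Q \<in> Om \<sigma> k. 3 \<le> card Q}"
      then obtain Q where Q: "Q \<in> Om \<sigma> k" "3 \<le> card Q" "x = card Q" by auto
      have "card Q \<le> card {..<k}" using O3'[OF perm Q(1)] by (intro card_mono) auto
      thus "x \<in> {3..k}" using Q by auto
    qed
  qed
  also have "\<dots> = (\<Sum>a=3..k. (a - 2) * cyc_count k \<sigma> a)"
  proof (intro sum.cong refl)
    fix a assume a: "a \<in> {3..k}"
    have "{Q \<in> {Q \<in> Om \<sigma> k. 3 \<le> card Q}. card Q = a} = {Q \<in> Om \<sigma> k. card Q = a}" using a by auto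
    hence "(\<Sum>Q\<in>{Q \<in> {Q \<in> Om \<sigma> k. 3 \<le> card Q}. card Q = a}. card Q - 2) = (\<Sum>Q\<in>{Q \<in> Om \<sigma> k. card Q = a}. card Q - 2)"
      by (simp only:)
    also have "\<dots> = (\<Sum>Q\<in>{Q \<in> Om \<sigma> k. card Q = a}. a - 2)"
      by (rule sum.cong) auto
    also have "\<dots> = (a - 2) * cyc_count k \<sigma> a" using cyc_eq[OF perm] by simp
    finally show "(\<Sum>Q\<in>{Q \<in> {Q \<in> Om \<sigma> k. 3 \<le> card Q}. card Q = a}. card Q - 2) = (a - 2) * cyc_count k \<sigma> a" .
  qed
  finally show ?thesis by simp
qed

lemma sum_card_split:
  assumes perm: "\<sigma> permutes {..<k}"
  shows "sum card (Om \<sigma> k) = (\<Sum>Q\<in>Om \<sigma> k. card Q - 2) + card {Q \<in> Om \<sigma> k. card Q = 1} + 2 * card {Q \<in> Om \<sigma> k. 2 \<le> card Q}"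
proof -
  have fin: "finite (Om \<sigma> k)" using Om_fin[OF perm] .
  have "sum card (Om \<sigma> k) = (\<Sum>Q\<in>Om \<sigma> k. (card Q - 2) + (if card Q = 1 then 1 else 2))"
  proof (intro sum.cong refl)
    fix Q assume "Q \<in> Om \<sigma> k"
    hence "1 \<le> card Q" by (rule Om_card1[OF perm])
    thus "card Q = (card Q - 2) + (if card Q = 1 then 1 else 2)" by auto
  qed
  also have "\<dots> = (\<Sum>Q\<in>Om \<sigma> k. card Q - 2) + (\<Sum>Q\<in>Om \<sigma> k. (if card Q = 1 then 1 else 2))"
    by (rule sum.distrib)
  also have "(\<Sum>Q\<in>Om \<sigma> k. (if card Q = 1 then 1 else 2)) =
      (\<Sum>Q\<in>Om \<sigma> k \<inter> {Q. card Q = 1}. 1) + (\<Sum>Q\<in>Om \<sigma> k \<inter> - {Q. card Q = 1}. 2::nat)"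
    by (rule sum.If_cases[OF fin])
  also have "Om \<sigma> k \<inter> {Q. card Q = 1} = {Q \<in> Om \<sigma> k. card Q = 1}" by auto
  also have "Om \<sigma> k \<inter> - {Q. card Q = 1} = {Q \<in> Om \<sigma> k. 2 \<le> card Q}"
  proof (intro equalityI subsetI)
    fix Q assume "Q \<in> Om \<sigma> k \<inter> - {Q. card Q = 1}"
    moreover hence "1 \<le> card Q" using Om_card1[OF perm] by auto
    ultimately show "Q \<in> {Q \<in> Om \<sigma> k. 2 \<le> card Q}" by auto
  qed auto
  finally show ?thesis by simp
qed

theorem lemma5p10:
  shows "\<exists>C>0. \<forall>(\<alpha>::real) (N::nat) (k::nat) (\<sigma>::nat \<Rightarrow> nat).
    0 < \<alpha> \<and> \<alpha> < 1 \<and> k \<ge> 1 \<and> real N \<ge> 16 * real k ^ 4 / (wB \<alpha>)\<^sup>2 \<and> \<sigma> permutes {..<k} \<longrightarrow>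
    f_alpha N k \<alpha> \<sigma> \<le>
      C * real k * exp (real k powr (3/4))
      * inverse (wB \<alpha> ^ (\<Sum>a=3..k. (a - 2) * cyc_count k \<sigma> a))
      * real (dfact (cyc_count k \<sigma> 1))
      * real N powr (real (cyc_count k \<sigma> 1) / 2 + real (cyc_count_ge k \<sigma> 2))"
proof (intro exI[of _ 2] conjI allI impI)
  show "(0::real) < 2" by simp
  fix \<alpha> :: real and N k :: nat and \<sigma> :: "nat \<Rightarrow> nat"
  assume H: "0 < \<alpha> \<and> \<alpha> < 1 \<and> k \<ge> 1 \<and> real N \<ge> 16 * real k ^ 4 / (wB \<alpha>)\<^sup>2 \<and> \<sigma> permutes {..<k}"
  hence a: "0 < \<alpha>" "\<alpha> < 1" and k: "1 \<le> k" and NH: "real N \<ge> 16 * real k ^ 4 / (wB \<alpha>)\<^sup>2"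
    and perm: "\<sigma> permutes {..<k}" by auto
  define w where "w = wB \<alpha>"
  have w: "0 < w" unfolding w_def using wB_pos[OF a] .
  define c1 where "c1 = card {Q \<in> Om \<sigma> k. card Q = 1}"
  define m where "m = card {Q \<in> Om \<sigma> k. 2 \<le> card Q}"
  define E where "E = (\<Sum>Q\<in>Om \<sigma> k. card Q - 2)"
  have wN: "16 * real k ^ 4 \<le> w^2 * real N"
    using NH w unfolding w_def[symmetric] by (simp add: divide_le_eq mult.commute)
  have Npos: "0 < real N"
  proof -
    have "0 < 16 * real k ^ 4" using k by simp
    hence "0 < w^2 * real N" using wN by linarith
    thus ?thesis using w by (simp add: zero_less_mult_iff)
  qed
  define s where "s = sqrt (real N)"
  have s: "0 < s" "real N = s^2" unfolding s_def using Npos by auto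
  define \<epsilon> where "\<epsilon> = 1 / (w * s)"
  have e0: "0 < \<epsilon>" unfolding \<epsilon>_def using w s by simp
  have es: "\<epsilon> * s = 1 / w" unfolding \<epsilon>_def using s w by simp
  have ws: "4 * real k ^ 2 \<le> w * s"
  proof -
    have "sqrt (16 * real k ^ 4) \<le> sqrt (w^2 * real N)" using wN by (rule real_sqrt_le_mono)
    moreover have "sqrt (16 * real k ^ 4) = 4 * real k ^ 2"
    proof -
      have q: "16 * real k ^ 4 = (4 * real k ^ 2)^2" by (simp add: power2_eq_square power4_eq_xxxx)
      show ?thesis unfolding q by (rule real_sqrt_unique) auto
    qed
    moreover have "sqrt (w^2 * real N) = w * s" unfolding s_def using w by (simp add: real_sqrt_mult)
    ultimately show ?thesis by simp
  qed
  have e1: "\<epsilon> * (4 * real k ^ 2) \<le> 1"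
    unfolding \<epsilon>_def using ws w s by (simp add: divide_le_eq)
  have hb: "\<And>n. 2 \<le> n \<Longrightarrow> \<bar>mu \<alpha> n\<bar> \<le> (\<epsilon> * s) ^ (n - 2)"
    unfolding es w_def using mu_bound[OF a] by simp
  have TTb: "TT (\<lambda>n. \<bar>mu \<alpha> n\<bar>) N card (Om \<sigma> k) \<le>
     real (dfact c1) * ((1 + \<epsilon>^2)^k) ^ m * \<epsilon> ^ E * s ^ (sum card (Om \<sigma> k))"
    unfolding c1_def m_def E_def
    by (rule TT_bound[where h="\<lambda>n. \<bar>mu \<alpha> n\<bar>", OF _ _ _ hb s e0 e1 k])
       (use mu1[unfolded One_nat_def] Om_card1[OF perm, unfolded One_nat_def] in
         \<open>auto simp: mu0 Om_fin[OF perm] sum_card_Om[OF perm]\<close>)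
  have rho: "((1 + \<epsilon>^2)^k) ^ m \<le> 2"
  proof -
    have mk: "m \<le> k"
    proof -
      have "m \<le> card (Om \<sigma> k)" unfolding m_def using Om_fin[OF perm] by (intro card_mono) auto
      also have "card (Om \<sigma> k) = (\<Sum>Q\<in>Om \<sigma> k. 1)" by simp
      also have "\<dots> \<le> sum card (Om \<sigma> k)" using Om_card1[OF perm] by (intro sum_mono) auto
      finally show ?thesis using sum_card_Om[OF perm] by simp
    qed
    have "((1 + \<epsilon>^2)^k) ^ m \<le> ((1 + \<epsilon>^2)^k) ^ k"
      using mk e0 by (intro power_increasing) auto
    also have "\<dots> = (1 + \<epsilon>^2) ^ (k * k)" by (simp add: power_mult)
    also have "\<dots> \<le> 1 + real (k * k) * \<epsilon>^2 + (real (k * k))^2 * (\<epsilon>^2)^2"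
    proof (rule pow_bound)
      show "0 \<le> \<epsilon>^2" by simp
      have kk: "real k ^ 2 * \<epsilon> \<le> 1/4" using e1 by (simp add: algebra_simps)
      have eps: "\<epsilon> \<le> 1/4"
      proof -
        have "1 \<le> real k ^ 2" using k by simp
        hence "1 * \<epsilon> \<le> real k ^ 2 * \<epsilon>" using e0 by (intro mult_right_mono) auto
        thus ?thesis using kk by linarith
      qed
      have "real (k * k) * \<epsilon>^2 = (real k ^ 2 * \<epsilon>) * \<epsilon>" by (simp add: power2_eq_square)
      also have "\<dots> \<le> (1/4) * (1/4)" using kk eps e0 by (intro mult_mono) auto
      finally show "real (k * k) * \<epsilon>^2 \<le> 1" by simp
    qed
    also have "\<dots> \<le> 2"
    proof -
      have kk: "real k ^ 2 * \<epsilon> \<le> 1/4" using e1 by (simp add: algebra_simps)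
      have eps: "\<epsilon> \<le> 1/4"
      proof -
        have "1 \<le> real k ^ 2" using k by simp
        hence "1 * \<epsilon> \<le> real k ^ 2 * \<epsilon>" using e0 by (intro mult_right_mono) auto
        thus ?thesis using kk by linarith
      qed
      have x: "real (k * k) * \<epsilon>^2 \<le> 1/16"
      proof -
        have "real (k * k) * \<epsilon>^2 = (real k ^ 2 * \<epsilon>) * \<epsilon>" by (simp add: power2_eq_square)
        also have "\<dots> \<le> (1/4) * (1/4)" using kk eps e0 by (intro mult_mono) auto
        finally show ?thesis by simp
      qed
      have "(real (k * k))^2 * (\<epsilon>^2)^2 = (real (k * k) * \<epsilon>^2) * (real (k * k) * \<epsilon>^2)"
        by (simp add: power2_eq_square)
      also have "\<dots> \<le> (1/16) * (1/16)" using x e0 by (intro mult_mono) auto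
      finally show ?thesis using x by linarith
    qed
    finally show ?thesis .
  qed
  have pw: "\<epsilon> ^ E * s ^ (sum card (Om \<sigma> k)) = (1 / w) ^ E * real N powr (real c1 / 2 + real m)"
  proof -
    have "sum card (Om \<sigma> k) = E + (c1 + 2 * m)" unfolding E_def c1_def m_def
      using sum_card_split[OF perm] by simp
    hence "\<epsilon> ^ E * s ^ (sum card (Om \<sigma> k)) = (\<epsilon> * s) ^ E * s ^ (c1 + 2 * m)"
      by (simp add: power_add power_mult_distrib)
    also have "s ^ (c1 + 2 * m) = real N powr (real c1 / 2 + real m)"
    proof -
      have "s ^ (c1 + 2 * m) = s powr real (c1 + 2 * m)" using powr_realpow[OF s(1), of "c1 + 2 * m"] by simp
      also have "s powr real (c1 + 2 * m) = (real N powr (1/2)) powr real (c1 + 2 * m)"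
        unfolding s_def using Npos by (simp add: powr_half_sqrt)
      also have "(real N powr (1/2)) powr real (c1 + 2 * m) = real N powr (real c1 / 2 + real m)"
        by (simp add: powr_powr algebra_simps)
      finally show ?thesis .
    qed
    finally show ?thesis unfolding es .
  qed
  have "f_alpha N k \<alpha> \<sigma> \<le> TT (\<lambda>n. \<bar>mu \<alpha> n\<bar>) N card (Om \<sigma> k)"
    by (rule f_le_TT[OF perm a])
  also have "\<dots> \<le> real (dfact c1) * ((1 + \<epsilon>^2)^k) ^ m * (\<epsilon> ^ E * s ^ (sum card (Om \<sigma> k)))"
    using TTb by (simp add: mult.assoc)
  also have "\<dots> = real (dfact c1) * ((1 + \<epsilon>^2)^k) ^ m * ((1 / w) ^ E * real N powr (real c1 / 2 + real m))"
    unfolding pw ..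
  also have "\<dots> \<le> real (dfact c1) * 2 * ((1 / w) ^ E * real N powr (real c1 / 2 + real m))"
    using rho w by (intro mult_right_mono mult_left_mono) auto
  also have "\<dots> \<le> 2 * real k * exp (real k powr (3/4)) * inverse (w ^ E) * real (dfact c1) * real N powr (real c1 / 2 + real m)"
  proof -
    have "1 \<le> real k * exp (real k powr (3/4))"
    proof -
      have "1 \<le> exp (real k powr (3/4))" by simp
      moreover have "1 \<le> real k" using k by simp
      ultimately have "1 * 1 \<le> real k * exp (real k powr (3/4))" by (intro mult_mono) auto
      thus ?thesis by simp
    qed
    moreover have "0 \<le> real (dfact c1) * 2 * ((1 / w) ^ E * real N powr (real c1 / 2 + real m))" using w by simp
    ultimately have "real (dfact c1) * 2 * ((1 / w) ^ E * real N powr (real c1 / 2 + real m))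
        \<le> (real k * exp (real k powr (3/4))) * (real (dfact c1) * 2 * ((1 / w) ^ E * real N powr (real c1 / 2 + real m)))"
      using mult_right_mono[of 1 "real k * exp (real k powr (3/4))"] by fastforce
    moreover have "inverse (w ^ E) = (1 / w) ^ E" by (simp add: power_one_over inverse_eq_divide)
    ultimately show ?thesis by (simp add: mult_ac)
  qed
  finally show "f_alpha N k \<alpha> \<sigma> \<le> 2 * real k * exp (real k powr (3/4))
      * inverse (wB \<alpha> ^ (\<Sum>a=3..k. (a - 2) * cyc_count k \<sigma> a))
      * real (dfact (cyc_count k \<sigma> 1))
      * real N powr (real (cyc_count k \<sigma> 1) / 2 + real (cyc_count_ge k \<sigma> 2))"
    unfolding E_eq[OF perm] unfolding cyc_eq[OF perm] cyc_ge_eq[OF perm] w_def[symmetric] c1_def[symmetric]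
      m_def[symmetric] E_def[symmetric] .
qed


end
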